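(* In the multi-access coded caching scheme obtained from a cross resolvable design with a chosen $z\in\{2,\dots,r\}$ for which $\mu_z$ exists (described in the context), the number of users benefited in each transmission (the coding gain) is $g=2^z$.
   Context: A resolvable design $(X,\mathcal{A})$: $X$ a finite set of $v$ points, $\mathcal{A}$ a collection of $b$ blocks each of size $k$, partitioned into $r$ parallel classes, each being a set of $b_r=v/k$ pairwise disjoint blocks with union $X$. $\mu_z$ exists if $|B_1\cap\cdots\cap B_z|$ equals the same nonzero value $\mu_z$ for every choice of blocks from $z$ distinct parallel classes. Users: one user $U_H$ for each set $H$ of $z$ blocks from $z$ distinct parallel classes, connected to the caches of those blocks (one cache per block). Placement: each file $W_i$ is split into subfiles $W_{i,x}$, $x\in X$; the cache of block $A_j$ stores $W_{i,x}$ for $x\in A_j$ and all $i$. Delivery (distinct demands $d_m$): for each choice of $z$ parallel classes $\mathcal{P}_1,\dots,\mathcal{P}_z$ and each choice of a pair of distinct blocks $\{C_{s,i_s},C_{s,j_s}\}\subseteq\mathcal{P}_s$ for every $s\in[z]$, let $\mathcal{X}$ be the $2^z$ users whose caches consist of one block from each chosen pair; for $m\in\mathcal{X}$ connected to $C_{1,a_1},\dots,C_{z,a_z}$, with $e_s$ the other index of $\{i_s,j_s\}$, put $f_m=C_{1,e_1}\cap\cdots\cap C_{z,e_z}=\{y_{m,1},\dots,y_{m,\mu_z}\}$, and transmit $\bigoplus_{m\in\mathcal{X}}W_{d_m,y_{m,s}}$ for each $s\in[\mu_z]$. A user is benefited by a transmission if it obtains a subfile of its demanded file from it. *)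

theory Defs
  imports Main "HOL-Library.FuncSet"
begin

text \<open>A block of the design is identified by the pair (class index, block).\<close>
definition resolvable_design :: "'a set \<Rightarrow> nat \<Rightarrow> nat \<Rightarrow> (nat \<Rightarrow> 'a set set) \<Rightarrow> bool" where
  "resolvable_design X k r P \<longleftrightarrow> finite X \<and> 0 < k \<and>
     (\<forall>t\<in>{1..r}. (\<forall>B\<in>P t. B \<subseteq> X \<and> card B = k) \<and> \<Union>(P t) = X \<and>
        (\<forall>B\<in>P t. \<forall>B'\<in>P t. B \<noteq> B' \<longrightarrow> B \<inter> B' = {}) \<and> card (P t) = card X div k)"

definition mu_exists :: "nat \<Rightarrow> (nat \<Rightarrow> 'a set set) \<Rightarrow> nat \<Rightarrow> nat \<Rightarrow> bool" where
  "mu_exists r P z \<mu> \<longleftrightarrow> 0 < \<mu> \<and>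
     (\<forall>J. J \<subseteq> {1..r} \<and> card J = z \<longrightarrow> (\<forall>g\<in>Pi J P. card (\<Inter>t\<in>J. g t) = \<mu>))"

text \<open>The user connected to the blocks g t of classes t \<in> J.\<close>
definition user_of :: "nat set \<Rightarrow> (nat \<Rightarrow> 'a set) \<Rightarrow> (nat \<times> 'a set) set" where
  "user_of J g = (\<lambda>t. (t, g t)) ` J"

definition users :: "nat \<Rightarrow> (nat \<Rightarrow> 'a set set) \<Rightarrow> nat \<Rightarrow> (nat \<times> 'a set) set set" where
  "users r P z = {H. \<exists>J g. J \<subseteq> {1..r} \<and> card J = z \<and> g \<in> Pi J P \<and> H = user_of J g}"

text \<open>Points x whose subfiles W_{i,x} (for all i) are accessible to user H.\<close>
definition cache :: "(nat \<times> 'a set) set \<Rightarrow> 'a set" where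
  "cache H = \<Union>(snd ` H)"

text \<open>A transmission is the XOR of the subfiles W_{i,x} for (i,x) in T.
  User H is benefited if it obtains from it a subfile of its demanded file
  (not already cached), i.e. all other summands are cached.\<close>
definition benefited :: "((nat \<times> 'a set) set \<Rightarrow> 'f) \<Rightarrow> (nat \<times> 'a set) set \<Rightarrow> ('f \<times> 'a) set \<Rightarrow> bool" where
  "benefited d H T \<longleftrightarrow> (\<exists>x. (d H, x) \<in> T \<and> x \<notin> cache H \<and>
       (\<forall>p\<in>T. p \<noteq> (d H, x) \<longrightarrow> snd p \<in> cache H))"

definition other :: "(nat \<Rightarrow> 'a set) \<Rightarrow> (nat \<Rightarrow> 'a set) \<Rightarrow> (nat \<Rightarrow> 'a set) \<Rightarrow> nat \<Rightarrow> 'a set" where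
  "other i j c t = (if c t = i t then j t else i t)"

definition user_group :: "nat set \<Rightarrow> (nat \<Rightarrow> 'a set) \<Rightarrow> (nat \<Rightarrow> 'a set) \<Rightarrow> (nat \<times> 'a set) set set" where
  "user_group J i j = user_of J ` (PiE J (\<lambda>t. {i t, j t}))"

definition transmission :: "((nat \<times> 'a set) set \<Rightarrow> 'f) \<Rightarrow> ((nat \<times> 'a set) set \<Rightarrow> nat \<Rightarrow> 'a)
     \<Rightarrow> nat set \<Rightarrow> (nat \<Rightarrow> 'a set) \<Rightarrow> (nat \<Rightarrow> 'a set) \<Rightarrow> nat \<Rightarrow> ('f \<times> 'a) set" where
  "transmission d y J i j s = (\<lambda>m. (d m, y m s)) ` user_group J i j"

end

theory Submission
  imports Defs
begin

theorem lemma4: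
  fixes X :: "'a set" and P :: "nat \<Rightarrow> 'a set set"
    and d :: "(nat \<times> 'a set) set \<Rightarrow> 'f"
    and y :: "(nat \<times> 'a set) set \<Rightarrow> nat \<Rightarrow> 'a"
    and i j :: "nat \<Rightarrow> 'a set"
  assumes design: "resolvable_design X k r P"
    and z: "z \<in> {2..r}"
    and mu: "mu_exists r P z \<mu>"
    and distinct_demands: "inj_on d (users r P z)"
    and J: "J \<subseteq> {1..r}" "card J = z"
    and pairs: "\<forall>t\<in>J. i t \<in> P t \<and> j t \<in> P t \<and> i t \<noteq> j t"
    and enum: "\<forall>c\<in>PiE J (\<lambda>t. {i t, j t}).
                 bij_betw (y (user_of J c)) {1..\<mu>} (\<Inter>t\<in>J. other i j c t)"
    and s: "s \<in> {1..\<mu>}"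
  shows "{H \<in> users r P z. benefited d H (transmission d y J i j s)} = user_group J i j
         \<and> card (user_group J i j) = 2 ^ z"
proof -
  let ?C = "PiE J (\<lambda>t. {i t, j t})"
  let ?T = "transmission d y J i j s"
  have finJ: "finite J" using J(1) finite_subset by blast
  have Jne: "J \<noteq> {}" using J z by auto
  have disj: "\<And>t. t \<in> J \<Longrightarrow> i t \<inter> j t = {}"
  proof -
    fix t assume t: "t \<in> J"
    then have t1: "t \<in> {1..r}" using J by auto
    have "\<forall>B\<in>P t. \<forall>B'\<in>P t. B \<noteq> B' \<longrightarrow> B \<inter> B' = {}"
      using design t1 unfolding resolvable_design_def by simp
    then show "i t \<inter> j t = {}" using pairs t by simp
  qed
  have uinj: "inj_on (user_of J) ?C"
  proof (rule inj_onI)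
    fix c c' assume c: "c \<in> ?C" and c': "c' \<in> ?C" and eq: "user_of J c = user_of J c'"
    have "\<And>t. t \<in> J \<Longrightarrow> c t = c' t"
    proof -
      fix t assume t: "t \<in> J"
      then have "(t, c t) \<in> user_of J c'" using eq unfolding user_of_def by auto
      then show "c t = c' t" unfolding user_of_def by auto
    qed
    then show "c = c'" by (rule PiE_ext[OF c c'])
  qed
  have card: "card (user_group J i j) = 2 ^ z"
  proof -
    have "card (user_group J i j) = card ?C" unfolding user_group_def
      using uinj by (simp add: card_image)
    also have "\<dots> = (\<Prod>t\<in>J. card {i t, j t})" using finJ by (simp add: card_PiE)
    also have "\<dots> = (\<Prod>t\<in>J. 2)" using pairs by (intro prod.cong) auto
    finally show ?thesis using J by simp
  qed
  have sub: "user_group J i j \<subseteq> users r P z"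
  proof
    fix m assume "m \<in> user_group J i j"
    then obtain c where c: "c \<in> ?C" and mc: "m = user_of J c" unfolding user_group_def by auto
    have "c \<in> Pi J P" using c pairs by (auto simp: PiE_def Pi_def)
    then show "m \<in> users r P z" unfolding users_def using J mc by blast
  qed
  have cacheu: "cache (user_of J c) = (\<Union>t\<in>J. c t)" for c
    unfolding cache_def user_of_def by (auto simp: image_image)
  have oth1: "other i j c t \<inter> c t = {}" if "c \<in> ?C" "t \<in> J" for c t
  proof -
    have "c t \<in> {i t, j t}" using PiE_mem[OF that(1) that(2)] .
    then show ?thesis using disj[OF that(2)] unfolding other_def by auto
  qed
  have oth2: "other i j c' t = c t" if "c \<in> ?C" "c' \<in> ?C" "t \<in> J" "c' t \<noteq> c t" for c c' t
  proof -
    have "c t \<in> {i t, j t}" "c' t \<in> {i t, j t}" using PiE_mem[OF that(1) that(3)] PiE_mem[OF that(2) that(3)] by simp_all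
    then show ?thesis using that(4) unfolding other_def by auto
  qed
  have ben: "benefited d m ?T" if m: "m \<in> user_group J i j" for m
  proof -
    obtain c where c: "c \<in> ?C" and mc: "m = user_of J c" using m unfolding user_group_def by auto
    define x where "x = y m s"
    have xin: "x \<in> (\<Inter>t\<in>J. other i j c t)"
      unfolding x_def mc using bij_betw_apply[OF bspec[OF enum c] s] .
    have "x \<notin> cache m"
      unfolding mc cacheu using xin oth1[OF c] by blast
    moreover have "(d m, x) \<in> ?T" unfolding transmission_def x_def using m by (rule rev_image_eqI) simp
    moreover have "snd p \<in> cache m" if p: "p \<in> ?T" "p \<noteq> (d m, x)" for p
    proof -
      have "p \<in> (\<lambda>m. (d m, y m s)) ` user_group J i j" using p(1) unfolding transmission_def .
      then obtain m' where m': "m' \<in> user_group J i j" and pm: "p = (d m', y m' s)"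
        by (rule imageE)
      have "m' \<in> user_of J ` ?C" using m' unfolding user_group_def .
      then obtain c' where c': "c' \<in> ?C" and mc': "m' = user_of J c'" by (rule imageE)
      have "c' \<noteq> c"
      proof
        assume "c' = c"
        then have "m' = m" using mc mc' by simp
        then have "p = (d m, x)" using pm x_def by simp
        then show False using p(2) by simp
      qed
      have "\<exists>t\<in>J. c' t \<noteq> c t"
      proof (rule ccontr)
        assume "\<not> (\<exists>t\<in>J. c' t \<noteq> c t)"
        then have "c' = c" by (intro PiE_ext[OF c' c]) blast
        then show False using \<open>c' \<noteq> c\<close> by simp
      qed
      then obtain t where t: "t \<in> J" "c' t \<noteq> c t" by blast
      have "y m' s \<in> (\<Inter>t\<in>J. other i j c' t)"
        unfolding mc' using bij_betw_apply[OF bspec[OF enum c'] s] .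
      then have "y m' s \<in> other i j c' t" using t(1) by blast
      then have "y m' s \<in> c t" using oth2[OF c c' t] by simp
      then have "y m' s \<in> (\<Union>t\<in>J. c t)" using t(1) by blast
      then show ?thesis unfolding pm mc cacheu by simp
    qed
    ultimately show ?thesis unfolding benefited_def by (intro exI[of _ x]) blast
  qed
  have "{H \<in> users r P z. benefited d H ?T} = user_group J i j"
  proof
    show "user_group J i j \<subseteq> {H \<in> users r P z. benefited d H ?T}" using sub ben by auto
  next
    show "{H \<in> users r P z. benefited d H ?T} \<subseteq> user_group J i j"
    proof
      fix H assume H: "H \<in> {H \<in> users r P z. benefited d H ?T}"
      then obtain x where "(d H, x) \<in> ?T" unfolding benefited_def by auto
      then obtain m where m: "m \<in> user_group J i j" "d H = d m" unfolding transmission_def by auto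
      then have "H = m" using distinct_demands H sub by (auto dest: inj_onD)
      then show "H \<in> user_group J i j" using m by simp
    qed
  qed
  then show ?thesis using card by simp
qed

end
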